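(* Let $G$ be the corresponding graph of an array $A$ with reach one, and let $F$ be a resulting DFS forest of $G$. Let $H'$ be obtained by merging the sub-trees of $F$; let $H_1,R_1$ be the graph and root list produced by the merge step on $H'$ with the list of roots of $F$, and $F_1$ the resulting DFS forest of $H_1$ with visiting list $R_1$; for $i>1$ let $H_i,R_i$ be produced by the merge step on $F_{i-1}$ with root list $R_{i-1}$, and $F_i$ the resulting DFS forest of $H_i$ with visiting list $R_i$. Then there exists a finite $i$ such that $F_i$ has exactly one component, i.e. is a tree (if $F$ itself has one component, $F$ is already such a tree).
   Context: An array is a finite sequence $A=(A[1],\dots,A[n])$ of pairwise distinct real numbers. A comparison graph on $A$ is a directed graph on $\{1,\dots,n\}$ all of whose arcs $(u,v)$ satisfy $A[u]<A[v]$. The corresponding graph of $A$ with reach one has an arc $(i,j)$ whenever $j\equiv i\pm1\pmod n$, $j\ne i$, and $A[i]<A[j]$. Components are connected components of the underlying undirected graph. DFS: adjacency lists sorted in increasing $A$-value; given a visiting list $(l_1,\dots,l_m)$ (for $F$, some ordering of all vertices), for each unvisited $l_t$ call Visit$(l_t)$, where Visit$(u)$ marks $u$ and, for each out-neighbour $w$ of $u$ in increasing $A$-value that is unvisited, sets parent$(w)=u$ and calls Visit$(w)$. The resulting DFS forest has arcs $(\mathrm{parent}(w),w)$; its roots are the vertices without parent. Merging the sub-trees of $F$: for each component of $F$ whose root has exactly two children $a_1,b_1$, set $p=a_1,q=b_1$ and, while both are defined: if $A[p]<A[q]$ add $(p,q)$ and replace $p$ by its smallest-valued child in $F$ (undefined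 if none); else add $(q,p)$ and replace $q$ likewise. Component merge of components $C,D$: set $p,q$ to the minimum-valued vertices of $C,D$; while both defined: if $A[p]<A[q]$ add $(p,q)$ and replace $p$ by the smallest-valued out-neighbour of $p$ within $C$ (ignoring arcs added in this merge; undefined if none); else add $(q,p)$ and replace $q$ analogously in $D$. Merge step with root list $(\rho_1,\dots,\rho_k)$ (the minimum-valued vertices of the components): component-merge the components of $\rho_{2j-1},\rho_{2j}$ for $j=1,\dots,\lfloor k/2\rfloor$ and return the list obtained by deleting the larger-valued root of each merged pair. *)

theory Defs
  imports Complex_Main
begin

text \<open>Vertices are 0..<n (the paper's 1..n shifted by one); a graph is a set of arcs.\<close>

definition reach1_graph :: "(nat \<Rightarrow> real) \<Rightarrow> nat \<Rightarrow> (nat \<times> nat) set" where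
  "reach1_graph A n = {(i, j). i < n \<and> j < n \<and> j \<noteq> i \<and>
      (j = (i + 1) mod n \<or> j = (i + n - 1) mod n) \<and> A i < A j}"

definition out_sorted :: "(nat \<Rightarrow> real) \<Rightarrow> nat \<Rightarrow> (nat \<times> nat) set \<Rightarrow> nat \<Rightarrow> nat list" where
  "out_sorted A n E u = sort_key A (filter (\<lambda>w. (u, w) \<in> E) [0..<n])"

text \<open>Visit(u), with a fuel argument (fuel Suc n is never exhausted, since the
  recursion depth is at most the number of vertices). State = (visited, tree arcs).\<close>
fun dfs_visit :: "nat \<Rightarrow> (nat \<Rightarrow> real) \<Rightarrow> nat \<Rightarrow> (nat \<times> nat) set \<Rightarrow> nat
      \<Rightarrow> nat set \<times> (nat \<times> nat) set \<Rightarrow> nat set \<times> (nat \<times> nat) set" where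
  "dfs_visit 0 A n E u st = st"
| "dfs_visit (Suc k) A n E u st =
     fold (\<lambda>w st'. if w \<in> fst st' then st'
                   else dfs_visit k A n E w (fst st', insert (u, w) (snd st')))
          (out_sorted A n E u) (insert u (fst st), snd st)"

text \<open>The DFS forest (set of arcs (parent w, w)) with visiting list L.\<close>
definition dfs_forest :: "(nat \<Rightarrow> real) \<Rightarrow> nat \<Rightarrow> (nat \<times> nat) set \<Rightarrow> nat list \<Rightarrow> (nat \<times> nat) set" where
  "dfs_forest A n E L = snd (fold (\<lambda>l st. if l \<in> fst st then st else dfs_visit (Suc n) A n E l st) L ({}, {}))"

definition dfs_roots :: "(nat \<times> nat) set \<Rightarrow> nat list \<Rightarrow> nat list" where
  "dfs_roots T L = filter (\<lambda>l. \<forall>p. (p, l) \<notin> T) L"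

definition minv :: "(nat \<Rightarrow> real) \<Rightarrow> nat set \<Rightarrow> nat" where
  "minv A S = arg_min_on A S"

definition min_out :: "(nat \<Rightarrow> real) \<Rightarrow> (nat \<times> nat) set \<Rightarrow> nat set \<Rightarrow> nat \<Rightarrow> nat option" where
  "min_out A E C p = (let S = {w \<in> C. (p, w) \<in> E} in if S = {} then None else Some (minv A S))"

text \<open>Fuel: each iteration advances one pointer to a strictly larger value
  inside C or D, so fuel 2n+2 is never exhausted.\<close>
fun zip_merge :: "nat \<Rightarrow> (nat \<Rightarrow> real) \<Rightarrow> (nat \<times> nat) set \<Rightarrow> nat set \<Rightarrow> nat set
      \<Rightarrow> nat option \<Rightarrow> nat option \<Rightarrow> (nat \<times> nat) set" where
  "zip_merge (Suc k) A E C D (Some p) (Some q) =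
     (if A p < A q then insert (p, q) (zip_merge k A E C D (min_out A E C p) (Some q))
      else insert (q, p) (zip_merge k A E C D (Some p) (min_out A E D q)))"
| "zip_merge _ A E C D _ _ = {}"

definition children :: "(nat \<times> nat) set \<Rightarrow> nat \<Rightarrow> nat set" where
  "children F r = {w. (r, w) \<in> F}"

definition merge_subtrees :: "(nat \<Rightarrow> real) \<Rightarrow> nat \<Rightarrow> (nat \<times> nat) set \<Rightarrow> (nat \<times> nat) set" where
  "merge_subtrees A n F = F \<union>
     (\<Union>r \<in> {r. r < n \<and> (\<forall>p. (p, r) \<notin> F) \<and> card (children F r) = 2}.
        (let a = minv A (children F r); b = arg_max_on A (children F r) in
         zip_merge (2 * n + 2) A F {..<n} {..<n} (Some a) (Some b)))"

definition ucomp :: "nat \<Rightarrow> (nat \<times> nat) set \<Rightarrow> nat \<Rightarrow> nat set" where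
  "ucomp n E v = {u. u < n \<and> (v, u) \<in> (E \<union> converse E)\<^sup>*}"

definition comp_merge :: "(nat \<Rightarrow> real) \<Rightarrow> nat \<Rightarrow> (nat \<times> nat) set \<Rightarrow> nat set \<Rightarrow> nat set \<Rightarrow> (nat \<times> nat) set" where
  "comp_merge A n E C D = zip_merge (2 * n + 2) A E C D (Some (minv A C)) (Some (minv A D))"

fun mstep_arcs :: "(nat \<Rightarrow> real) \<Rightarrow> nat \<Rightarrow> (nat \<times> nat) set \<Rightarrow> nat list \<Rightarrow> (nat \<times> nat) set" where
  "mstep_arcs A n E (a # b # rs) = comp_merge A n E (ucomp n E a) (ucomp n E b) \<union> mstep_arcs A n E rs"
| "mstep_arcs A n E _ = {}"

fun mstep_roots :: "(nat \<Rightarrow> real) \<Rightarrow> nat list \<Rightarrow> nat list" where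
  "mstep_roots A (a # b # rs) = (if A a < A b then a else b) # mstep_roots A rs"
| "mstep_roots A rs = rs"

definition merge_step :: "(nat \<Rightarrow> real) \<Rightarrow> nat \<Rightarrow> (nat \<times> nat) set \<Rightarrow> nat list \<Rightarrow> (nat \<times> nat) set \<times> nat list" where
  "merge_step A n E R = (E \<union> mstep_arcs A n E R, mstep_roots A R)"

text \<open>One round: merge step on (graph, root list), then DFS of the result with visiting
  list the new root list. Returns (F_i, R_i).\<close>
definition merge_round :: "(nat \<Rightarrow> real) \<Rightarrow> nat \<Rightarrow> (nat \<times> nat) set \<times> nat list \<Rightarrow> (nat \<times> nat) set \<times> nat list" where
  "merge_round A n st = (let (H, R) = merge_step A n (fst st) (snd st) in (dfs_forest A n H R, R))"

definition one_component :: "nat \<Rightarrow> (nat \<times> nat) set \<Rightarrow> bool" where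
  "one_component n E \<longleftrightarrow> n > 0 \<and> (\<forall>u<n. \<forall>v<n. (u, v) \<in> (E \<union> converse E)\<^sup>*)"

end

theory Submission
  imports Defs
begin


lemma out_sorted_set: "set (out_sorted A n E u) = {w. w < n \<and> (u, w) \<in> E}"
  unfolding out_sorted_def by auto

lemma weak_chain:
  assumes "\<forall>(x,y)\<in>H. A x \<le> (A y :: real)" "(a, b) \<in> H\<^sup>*"
  shows "A a \<le> A b"
  using assms(2)
proof (induction rule: rtrancl_induct)
  case base then show ?case by simp
next
  case (step y z) then show ?case using assms(1) by force
qed

definition dinv :: "nat \<Rightarrow> (nat \<times> nat) set \<Rightarrow> nat set \<Rightarrow> nat set \<Rightarrow> nat set \<times> (nat \<times> nat) set \<Rightarrow> bool" where
"dinv n H Rt Q st \<longleftrightarrow> fst st \<subseteq> {..<n} \<and>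
   (\<forall>(u,w)\<in>snd st. u \<in> fst st \<and> w \<in> fst st \<and> (u,w) \<in> H \<and> u \<noteq> w) \<and>
   (\<forall>u u' w. (u,w) \<in> snd st \<longrightarrow> (u',w) \<in> snd st \<longrightarrow> u = u') \<and>
   (\<forall>v\<in>fst st. \<exists>l\<in>Rt. (l,v) \<in> (snd st)\<^sup>*) \<and>
   (\<forall>r\<in>Q. \<forall>p. (p,r) \<notin> snd st)"

context
  fixes A :: "nat \<Rightarrow> real" and n :: nat and H :: "(nat \<times> nat) set" and Rt Q :: "nat set"
  assumes Hr: "H \<subseteq> {..<n} \<times> {..<n}" and Hw: "\<forall>(x,y)\<in>H. A x \<le> A y"
    and inj: "inj_on A {..<n}" and Rtr: "Rt \<subseteq> {..<n}"
    and QR: "\<forall>r\<in>Q. \<forall>r2\<in>Rt. (r2,r) \<in> H\<^sup>* \<longrightarrow> r2 = r"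
begin

lemma dinv_T_H: "dinv n H Rt Q (V,T) \<Longrightarrow> T \<subseteq> H"
  unfolding dinv_def by auto

lemma dinv_arc:
  assumes d: "dinv n H Rt Q (V,T)" and u: "u \<in> V" and w: "w \<notin> V" "w < n" and uw: "(u,w) \<in> H"
  shows "dinv n H Rt Q (insert w V, insert (u,w) T)"
proof -
  have TH: "T \<subseteq> H" using d dinv_T_H by blast
  have I2: "\<forall>(x,y)\<in>T. x \<in> V \<and> y \<in> V \<and> (x,y) \<in> H \<and> x \<noteq> y"
   and I3: "\<forall>x x' y. (x,y) \<in> T \<longrightarrow> (x',y) \<in> T \<longrightarrow> x = x'"
   and I4: "\<forall>v\<in>V. \<exists>l\<in>Rt. (l,v) \<in> T\<^sup>*"
   and I5: "\<forall>r\<in>Q. \<forall>p. (p,r) \<notin> T" and I1: "V \<subseteq> {..<n}"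
    using d unfolding dinv_def by auto
  obtain l where l: "l \<in> Rt" "(l,u) \<in> T\<^sup>*" using I4 u by blast
  have mono: "T\<^sup>* \<subseteq> (insert (u,w) T)\<^sup>*" by (rule rtrancl_mono) blast
  have lw: "(l,w) \<in> (insert (u,w) T)\<^sup>*"
    using l mono by (meson insertI1 rtrancl.rtrancl_into_rtrancl subsetD)
  have wQ: "w \<notin> Q"
  proof
    assume "w \<in> Q"
    have lu: "(l,u) \<in> H\<^sup>*" using l(2) TH rtrancl_mono by blast
    then have "(l,w) \<in> H\<^sup>*" using uw by (meson rtrancl.rtrancl_into_rtrancl)
    then have "l = w" using QR \<open>w \<in> Q\<close> l(1) by blast
    then have "A w \<le> A u" using weak_chain[OF Hw lu] by simp
    moreover have "A u \<le> A w" using Hw uw by auto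
    ultimately have "A u = A w" by simp
    then have "u = w" using inj I1 u w(2) by (auto dest: inj_onD)
    then show False using u w by simp
  qed
  have J1: "insert w V \<subseteq> {..<n}" using I1 w by auto
  have J2: "\<forall>(x,y)\<in>insert (u,w) T. x \<in> insert w V \<and> y \<in> insert w V \<and> (x,y) \<in> H \<and> x \<noteq> y"
    using I2 u w uw by auto
  have J3: "\<forall>x x' y. (x,y) \<in> insert (u,w) T \<longrightarrow> (x',y) \<in> insert (u,w) T \<longrightarrow> x = x'"
    using I2 I3 w by fastforce
  have J4: "\<forall>v\<in>insert w V. \<exists>l\<in>Rt. (l,v) \<in> (insert (u,w) T)\<^sup>*"
    using I4 lw l(1) mono by blast
  have J5: "\<forall>r\<in>Q. \<forall>p. (p,r) \<notin> insert (u,w) T" using I5 wQ by auto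
  show ?thesis unfolding dinv_def fst_conv snd_conv
    using J1 J2 J3 J4 J5 by blast
qed

lemma dinv_start:
  assumes d: "dinv n H Rt Q (V,T)" and l: "l \<in> Rt" "l \<notin> V"
  shows "dinv n H Rt Q (insert l V, T)"
  using d l Rtr unfolding dinv_def by (auto 0 3)

lemma visit_lemma:
  "\<forall>u V T st'. u < n \<longrightarrow> u \<notin> V \<longrightarrow> card ({..<n} - V) < K \<longrightarrow> dinv n H Rt Q (insert u V, T)
     \<longrightarrow> dfs_visit K A n H u (V,T) = st' \<longrightarrow>
     dinv n H Rt Q st' \<and> insert u V \<subseteq> fst st' \<and> (\<forall>x \<in> fst st' - V. \<forall>w. (x,w) \<in> H \<longrightarrow> w \<in> fst st')"
proof (induction K)
  case 0 then show ?case by simp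
next
  case (Suc k)
  show ?case
  proof (intro allI impI)
    fix u V T st'
    assume u: "u < n" and uV: "u \<notin> V" and c: "card ({..<n} - V) < Suc k"
      and d0: "dinv n H Rt Q (insert u V, T)" and st': "dfs_visit (Suc k) A n H u (V,T) = st'"
    define f where "f = (\<lambda>w st'. if w \<in> fst st' then st'
                   else dfs_visit k A n H w (fst st', insert (u, w) (snd st')))"
    have st'f: "st' = fold f (out_sorted A n H u) (insert u V, T)"
      using st' by (simp add: f_def)
    have cu: "card ({..<n} - insert u V) < k"
    proof -
      have "{..<n} - insert u V = ({..<n} - V) - {u}" by auto
      then have "card ({..<n} - insert u V) = card ({..<n} - V) - 1"
        using u uV by simp
      moreover have "card ({..<n} - V) > 0" using u uV
        by (metis Diff_iff card_gt_0_iff finite_Diff finite_lessThan lessThan_iff empty_iff)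
      ultimately show ?thesis using c by simp
    qed
    have fold_lem: "\<And>ws s. dinv n H Rt Q s \<Longrightarrow> insert u V \<subseteq> fst s \<Longrightarrow>
       set ws \<subseteq> {w. w < n \<and> (u,w) \<in> H} \<Longrightarrow>
       dinv n H Rt Q (fold f ws s) \<and> fst s \<subseteq> fst (fold f ws s) \<and> set ws \<subseteq> fst (fold f ws s)
       \<and> (\<forall>x \<in> fst (fold f ws s) - fst s. \<forall>w. (x,w) \<in> H \<longrightarrow> w \<in> fst (fold f ws s))"
    proof -
      fix ws s
      show "dinv n H Rt Q s \<Longrightarrow> insert u V \<subseteq> fst s \<Longrightarrow>
       set ws \<subseteq> {w. w < n \<and> (u,w) \<in> H} \<Longrightarrow>
       dinv n H Rt Q (fold f ws s) \<and> fst s \<subseteq> fst (fold f ws s) \<and> set ws \<subseteq> fst (fold f ws s)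
       \<and> (\<forall>x \<in> fst (fold f ws s) - fst s. \<forall>w. (x,w) \<in> H \<longrightarrow> w \<in> fst (fold f ws s))"
      proof (induction ws arbitrary: s)
        case Nil then show ?case by simp
      next
        case (Cons w ws)
        obtain V1 T1 where s: "s = (V1, T1)" by (cases s)
        show ?case
        proof (cases "w \<in> V1")
          case True
          then have "f w s = s" by (simp add: f_def s)
          then show ?thesis using Cons.IH[of s] Cons.prems True s by auto
        next
          case False
          define s1 where "s1 = dfs_visit k A n H w (V1, insert (u, w) T1)"
          have fw: "f w s = s1" by (simp add: f_def s s1_def False)
          have wn: "w < n" "(u,w) \<in> H" using Cons.prems(3) by auto
          have "card ({..<n} - V1) \<le> card ({..<n} - insert u V)"
            using Cons.prems(2) s by (intro card_mono) auto
          then have cw: "card ({..<n} - V1) < k" using cu by simp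
          have dw: "dinv n H Rt Q (insert w V1, insert (u,w) T1)"
            using dinv_arc[of V1 T1 u w] Cons.prems s False wn by auto
          have r1: "dinv n H Rt Q s1 \<and> insert w V1 \<subseteq> fst s1 \<and>
                (\<forall>x \<in> fst s1 - V1. \<forall>w. (x,w) \<in> H \<longrightarrow> w \<in> fst s1)"
            using Suc.IH wn(1) False cw dw s1_def by blast
          have "dinv n H Rt Q (fold f ws s1) \<and> fst s1 \<subseteq> fst (fold f ws s1) \<and> set ws \<subseteq> fst (fold f ws s1)
             \<and> (\<forall>x \<in> fst (fold f ws s1) - fst s1. \<forall>w. (x,w) \<in> H \<longrightarrow> w \<in> fst (fold f ws s1))"
            using Cons.IH[of s1] r1 Cons.prems s by auto
          then have A1: "dinv n H Rt Q (fold f ws s1)" "fst s1 \<subseteq> fst (fold f ws s1)" "set ws \<subseteq> fst (fold f ws s1)"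
             "\<forall>x \<in> fst (fold f ws s1) - fst s1. \<forall>w. (x,w) \<in> H \<longrightarrow> w \<in> fst (fold f ws s1)" by auto
          have fe: "fold f (w # ws) s = fold f ws s1" using fw by simp
          have B1: "fst s \<subseteq> fst (fold f ws s1)" using r1 A1(2) s by auto
          have B2: "set (w#ws) \<subseteq> fst (fold f ws s1)" using r1 A1(2,3) s by auto
          have B3: "\<forall>x \<in> fst (fold f ws s1) - fst s. \<forall>w. (x,w) \<in> H \<longrightarrow> w \<in> fst (fold f ws s1)"
          proof (intro ballI allI impI)
            fix x w' assume x: "x \<in> fst (fold f ws s1) - fst s" and xw: "(x,w') \<in> H"
            show "w' \<in> fst (fold f ws s1)"
            proof (cases "x \<in> fst s1")
              case True
              then have "w' \<in> fst s1" using r1 x xw s by auto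
              then show ?thesis using A1(2) by auto
            next
              case False
              then show ?thesis using A1(4) x xw by auto
            qed
          qed
          show ?thesis unfolding fe using A1(1) B1 B2 B3 by blast
        qed
      qed
    qed
    have R: "dinv n H Rt Q st'" "insert u V \<subseteq> fst st'" "set (out_sorted A n H u) \<subseteq> fst st'"
       "\<forall>x \<in> fst st' - insert u V. \<forall>w. (x,w) \<in> H \<longrightarrow> w \<in> fst st'"
      using fold_lem[OF d0, of "out_sorted A n H u"] unfolding st'f out_sorted_set fst_conv
      by blast+
    have C: "\<forall>x \<in> fst st' - V. \<forall>w. (x,w) \<in> H \<longrightarrow> w \<in> fst st'"
    proof (intro ballI allI impI)
      fix x w assume x: "x \<in> fst st' - V" and xw: "(x,w) \<in> H"
      show "w \<in> fst st'"
      proof (cases "x = u")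
        case True
        then have "w \<in> set (out_sorted A n H u)" using xw Hr by (auto simp: out_sorted_set)
        then show ?thesis using R(3) by blast
      next
        case False
        then show ?thesis using R(4) x xw by blast
      qed
    qed
    show "dinv n H Rt Q st' \<and> insert u V \<subseteq> fst st' \<and> (\<forall>x \<in> fst st' - V. \<forall>w. (x,w) \<in> H \<longrightarrow> w \<in> fst st')"
      using R(1,2) C by blast
  qed
qed

lemma top_fold:
  fixes Ls :: "nat list"
  assumes "set Ls \<subseteq> Rt" and g: "g = (\<lambda>l st. if l \<in> fst st then st else dfs_visit (Suc n) A n H l st)"
  shows "dinv n H Rt Q s \<Longrightarrow> (\<forall>x\<in>fst s. \<forall>w. (x,w) \<in> H \<longrightarrow> w \<in> fst s) \<Longrightarrow>
    dinv n H Rt Q (fold g Ls s) \<and> set Ls \<subseteq> fst (fold g Ls s) \<and> fst s \<subseteq> fst (fold g Ls s)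
    \<and> (\<forall>x\<in>fst (fold g Ls s). \<forall>w. (x,w) \<in> H \<longrightarrow> w \<in> fst (fold g Ls s))"
  using assms(1)
proof (induction Ls arbitrary: s)
  case Nil then show ?case by simp
next
  case (Cons l Ls)
  obtain V T where s: "s = (V,T)" by (cases s)
  show ?case
  proof (cases "l \<in> V")
    case True
    then have gls: "g l s = s" by (simp add: g s)
    have e: "fold g (l#Ls) s = fold g Ls s" using gls by simp
    have "set Ls \<subseteq> Rt" using Cons.prems(3) by simp
    then have I: "dinv n H Rt Q (fold g Ls s)" "set Ls \<subseteq> fst (fold g Ls s)" "fst s \<subseteq> fst (fold g Ls s)"
     "\<forall>x\<in>fst (fold g Ls s). \<forall>w. (x,w) \<in> H \<longrightarrow> w \<in> fst (fold g Ls s)"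
      using Cons.IH[of s, OF Cons.prems(1,2)] by blast+
    have "l \<in> fst (fold g Ls s)" using I(3) True s by auto
    then have "set (l#Ls) \<subseteq> fst (fold g Ls s)" using I(2) by simp
    then show ?thesis unfolding e using I(1,3,4) by blast
  next
    case False
    define s1 where "s1 = dfs_visit (Suc n) A n H l (V,T)"
    have gl: "g l s = s1" by (simp add: g s s1_def False)
    have lR: "l \<in> Rt" using Cons.prems(3) by auto
    have ln: "l < n" using lR Rtr by auto
    have "card ({..<n} - V) \<le> card {..<n::nat}" by (intro card_mono) auto
    then have c: "card ({..<n} - V) < Suc n" by simp
    have d: "dinv n H Rt Q (insert l V, T)" using dinv_start[of V T l] Cons.prems(1) s lR False by auto
    have r1: "dinv n H Rt Q s1 \<and> insert l V \<subseteq> fst s1 \<and> (\<forall>x \<in> fst s1 - V. \<forall>w. (x,w) \<in> H \<longrightarrow> w \<in> fst s1)"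
      using visit_lemma[rule_format, of l V "Suc n" T s1, OF ln False c d s1_def[symmetric]] .
    have cl1: "\<forall>x\<in>fst s1. \<forall>w. (x,w) \<in> H \<longrightarrow> w \<in> fst s1"
    proof (intro ballI allI impI)
      fix x w assume x: "x \<in> fst s1" and xw: "(x,w) \<in> H"
      show "w \<in> fst s1"
      proof (cases "x \<in> V")
        case True then show ?thesis using Cons.prems(2) s xw r1 by auto
      next
        case False then show ?thesis using r1 x xw by blast
      qed
    qed
    have IH: "dinv n H Rt Q (fold g Ls s1) \<and> set Ls \<subseteq> fst (fold g Ls s1) \<and> fst s1 \<subseteq> fst (fold g Ls s1)
      \<and> (\<forall>x\<in>fst (fold g Ls s1). \<forall>w. (x,w) \<in> H \<longrightarrow> w \<in> fst (fold g Ls s1))"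
    proof -
      have a: "dinv n H Rt Q s1" using r1 by blast
      have b: "set Ls \<subseteq> Rt" using Cons.prems(3) by simp
      show ?thesis by (rule Cons.IH[of s1, OF a cl1 b])
    qed
    have fe: "fold g (l # Ls) s = fold g Ls s1" using gl by simp
    have s1f: "fst s1 \<subseteq> fst (fold g Ls s1)" using IH by blast
    have "insert l (fst s) \<subseteq> fst s1" using r1 s by simp
    then have "l \<in> fst (fold g Ls s1)" "fst s \<subseteq> fst (fold g Ls s1)" using s1f by blast+
    then have "set (l#Ls) \<subseteq> fst (fold g Ls s1)" "fst s \<subseteq> fst (fold g Ls s1)" using IH by auto
    then show ?thesis unfolding fe using IH by blast
  qed
qed

theorem dfs_props:
  assumes Ls: "set Ls = Rt" and T: "T = dfs_forest A n H Ls"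
  shows "T \<subseteq> H" "\<forall>(u,w)\<in>T. u \<noteq> w"
    "\<forall>u u' w. (u,w) \<in> T \<longrightarrow> (u',w) \<in> T \<longrightarrow> u = u'"
    "\<forall>r\<in>Q. \<forall>p. (p,r) \<notin> T"
    "\<And>v. (\<exists>r\<in>Rt. (r,v) \<in> H\<^sup>*) \<Longrightarrow> \<exists>l\<in>Rt. (l,v) \<in> T\<^sup>*"
proof -
  define g where "g = (\<lambda>l st. if l \<in> fst st then st else dfs_visit (Suc n) A n H l st)"
  have d0: "dinv n H Rt Q ({},{})" unfolding dinv_def by simp
  have R: "dinv n H Rt Q (fold g Ls ({},{})) \<and> set Ls \<subseteq> fst (fold g Ls ({},{}))
    \<and> (\<forall>x\<in>fst (fold g Ls ({},{})). \<forall>w. (x,w) \<in> H \<longrightarrow> w \<in> fst (fold g Ls ({},{})))"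
    using top_fold[of Ls g "({},{})", OF _ g_def d0] Ls by auto
  have Tf: "T = snd (fold g Ls ({},{}))" unfolding T dfs_forest_def g_def by simp
  obtain V where V: "fold g Ls ({},{}) = (V,T)" using Tf by (metis prod.collapse)
  have D: "dinv n H Rt Q (V,T)" "Rt \<subseteq> V" "\<forall>x\<in>V. \<forall>w. (x,w) \<in> H \<longrightarrow> w \<in> V"
    using R V Ls by auto
  show "T \<subseteq> H" using D(1) dinv_T_H by blast
  show "\<forall>(u,w)\<in>T. u \<noteq> w" using D(1) unfolding dinv_def by auto
  show "\<forall>u u' w. (u,w) \<in> T \<longrightarrow> (u',w) \<in> T \<longrightarrow> u = u'" using D(1) unfolding dinv_def by auto
  show "\<forall>r\<in>Q. \<forall>p. (p,r) \<notin> T" using D(1) unfolding dinv_def by auto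
  fix v assume "\<exists>r\<in>Rt. (r,v) \<in> H\<^sup>*"
  then obtain r where r: "r \<in> Rt" "(r,v) \<in> H\<^sup>*" by blast
  have "v \<in> V" using r(2)
  proof (induction rule: rtrancl_induct)
    case base then show ?case using r(1) D(2) by auto
  next
    case (step y z) then show ?case using D(3) by auto
  qed
  moreover have "\<forall>v\<in>V. \<exists>l\<in>Rt. (l,v) \<in> T\<^sup>*" using D(1) unfolding dinv_def by simp
  ultimately show "\<exists>l\<in>Rt. (l,v) \<in> T\<^sup>*" by blast
qed

end



lemma sym_path: "(a,b) \<in> (E \<union> E\<inverse>)\<^sup>* \<Longrightarrow> (b,a) \<in> (E \<union> E\<inverse>)\<^sup>*"
proof -
  assume "(a,b) \<in> (E \<union> E\<inverse>)\<^sup>*"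
  then have "(b,a) \<in> ((E \<union> E\<inverse>)\<inverse>)\<^sup>*" by (rule rtrancl_converseI)
  moreover have "(E \<union> E\<inverse>)\<inverse> = E \<union> E\<inverse>" by auto
  ultimately show ?thesis by simp
qed

lemma forest_lemma:
  assumes indeg: "\<forall>x y z. (x,z) \<in> F \<longrightarrow> (y,z) \<in> F \<longrightarrow> x = y" and pl: "\<forall>p. (p,r) \<notin> F"
    and "(r,v) \<in> (F \<union> F\<inverse>)\<^sup>*"
  shows "(r,v) \<in> F\<^sup>*"
  using assms(3)
proof (induction rule: rtrancl_induct)
  case base then show ?case by simp
next
  case (step y z)
  show ?case
  proof (cases "(y,z) \<in> F")
    case True then show ?thesis using step.IH by (meson rtrancl.rtrancl_into_rtrancl)
  next
    case False
    then have zy: "(z,y) \<in> F" using step.hyps(2) by auto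
    from step.IH show ?thesis
    proof (cases rule: rtranclE)
      case base then show ?thesis using zy pl by auto
    next
      case (step x)
      then have "x = z" using indeg zy by blast
      then show ?thesis using step by simp
    qed
  qed
qed

lemma closed_lemma:
  assumes "\<forall>x y. x \<in> W \<longrightarrow> (x,y) \<in> E \<longrightarrow> y \<in> W" "\<forall>x y. x \<in> W \<longrightarrow> (y,x) \<in> E \<longrightarrow> y \<in> W"
    and "r \<in> W" and "(r,v) \<in> (E \<union> E\<inverse>)\<^sup>*"
  shows "v \<in> W"
  using assms(4)
proof (induction rule: rtrancl_induct)
  case base then show ?case using assms(3) by simp
next
  case (step y z) then show ?case using assms(1,2) by blast
qed

lemma roots_eq:
  assumes indeg: "\<forall>x y z. (x,z) \<in> F \<longrightarrow> (y,z) \<in> F \<longrightarrow> x = y"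
    and pl: "\<forall>p. (p,r) \<notin> F" "\<forall>p. (p,r') \<notin> F"
    and "(r,x) \<in> F\<^sup>*" "(r',x) \<in> F\<^sup>*"
  shows "r = r'"
proof -
  have m: "F\<^sup>* \<subseteq> (F \<union> F\<inverse>)\<^sup>*" by (rule rtrancl_mono) blast
  have "(r,x) \<in> (F \<union> F\<inverse>)\<^sup>*" "(r',x) \<in> (F \<union> F\<inverse>)\<^sup>*" using assms(4,5) m by auto
  then have "(r,r') \<in> (F \<union> F\<inverse>)\<^sup>*" using sym_path by (meson rtrancl_trans)
  then have "(r,r') \<in> F\<^sup>*" using forest_lemma[OF indeg pl(1)] by blast
  then show ?thesis
    by (cases rule: rtranclE) (use pl(2) in auto)
qed

lemma min_out_in:
  assumes "finite C" "min_out A E C p = Some w"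
  shows "w \<in> C \<and> (p,w) \<in> E"
proof -
  let ?S = "{w \<in> C. (p, w) \<in> E}"
  have ne: "?S \<noteq> {}" and w: "w = minv A ?S" using assms(2) unfolding min_out_def Let_def
    by (auto split: if_splits)
  have "finite ?S" using assms(1) by simp
  then have "w \<in> ?S" using arg_min_if_finite(1)[OF _ ne, of A] w unfolding minv_def by simp
  then show ?thesis by simp
qed

lemma zip_arcs:
  assumes "\<forall>x w. x \<in> S \<longrightarrow> min_out A E C x = Some w \<longrightarrow> w \<in> S"
    "\<forall>x w. x \<in> S \<longrightarrow> min_out A E D x = Some w \<longrightarrow> w \<in> S"
  shows "set_option po \<subseteq> S \<Longrightarrow> set_option qo \<subseteq> S \<Longrightarrow>
    zip_merge k A E C D po qo \<subseteq> {(x,y). x \<in> S \<and> y \<in> S \<and> A x \<le> A y}"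
proof (induction k arbitrary: po qo)
  case 0 then show ?case by simp
next
  case (Suc k)
  show ?case
  proof (cases po)
    case None then show ?thesis by simp
  next
    case (Some p)
    show ?thesis
    proof (cases qo)
      case None then show ?thesis using Some by simp
    next
      case (Some q)
      have p: "p \<in> S" and q: "q \<in> S" using Suc.prems \<open>po = Some p\<close> Some by auto
      have m1: "set_option (min_out A E C p) \<subseteq> S" using assms(1) p by (cases "min_out A E C p") auto
      have m2: "set_option (min_out A E D q) \<subseteq> S" using assms(2) q by (cases "min_out A E D q") auto
      show ?thesis
      proof (cases "A p < A q")
        case True
        then show ?thesis using Suc.IH[OF m1, of "Some q"] p q \<open>po = Some p\<close> Some by auto
      next
        case False
        then show ?thesis using Suc.IH[of "Some p", OF _ m2] p q \<open>po = Some p\<close> Some by auto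
      qed
    qed
  qed
qed

lemma first_arc: "(if A p < A q then (p,q) else (q,p)) \<in> zip_merge (Suc k) A E C D (Some p) (Some q)"
  by simp

lemma minv_ucomp:
  assumes inj: "inj_on A {..<n}" and r: "r < n" and m: "\<forall>v\<in>ucomp n T r. A r \<le> A v"
  shows "minv A (ucomp n T r) = r"
proof -
  have "ucomp n T r \<subseteq> {..<n}" unfolding ucomp_def by auto
  then have i: "inj_on A {x. x \<in> ucomp n T r}" using inj inj_on_subset by auto
  have "r \<in> ucomp n T r" using r unfolding ucomp_def by auto
  then show ?thesis unfolding minv_def arg_min_on_def
    using arg_min_inj_eq[OF i, of r] m by auto
qed

fun surv :: "(nat \<Rightarrow> real) \<Rightarrow> nat list \<Rightarrow> nat \<Rightarrow> nat" where
  "surv A (a # b # rs) x = (if x = a \<or> x = b then (if A a < A b then a else b) else surv A rs x)"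
| "surv A rs x = x"

lemma mroots_sub: "set (mstep_roots A R) \<subseteq> set R"
  by (induction A R rule: mstep_roots.induct) auto

lemma surv_in: "x \<in> set R \<Longrightarrow> surv A R x \<in> set (mstep_roots A R)"
  by (induction A R rule: mstep_roots.induct) auto

lemma surv_fix: "distinct R \<Longrightarrow> r \<in> set (mstep_roots A R) \<Longrightarrow> surv A R r = r"
proof (induction A R rule: mstep_roots.induct)
  case (1 A a b rs)
  then show ?case using mroots_sub[of A rs] by auto
qed auto

lemma surv_le: "A (surv A R x) \<le> A x"
  by (induction A R x rule: surv.induct) auto

lemma mroots_distinct: "distinct R \<Longrightarrow> distinct (mstep_roots A R)"
proof (induction A R rule: mstep_roots.induct)
  case (1 A a b rs)
  then show ?case using mroots_sub[of A rs] by auto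
qed auto

lemma mroots_len: "length (mstep_roots A R) = (length R + 1) div 2"
  by (induction A R rule: mstep_roots.induct) auto

lemma marcs_sub: "distinct R \<Longrightarrow> mstep_arcs A n E R \<subseteq>
  {arc. \<exists>a b. a \<in> set R \<and> b \<in> set R \<and> surv A R a = surv A R b \<and> arc \<in> comp_merge A n E (ucomp n E a) (ucomp n E b)}"
proof (induction A n E R rule: mstep_arcs.induct)
  case (1 A n E a b rs)
  show ?case
  proof
    fix arc assume "arc \<in> mstep_arcs A n E (a # b # rs)"
    then consider "arc \<in> comp_merge A n E (ucomp n E a) (ucomp n E b)" | "arc \<in> mstep_arcs A n E rs" by auto
    then show "arc \<in> {arc. \<exists>a' b'. a' \<in> set (a#b#rs) \<and> b' \<in> set (a#b#rs) \<and> surv A (a#b#rs) a' = surv A (a#b#rs) b' \<and> arc \<in> comp_merge A n E (ucomp n E a') (ucomp n E b')}"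
    proof cases
      case 1 then show ?thesis by (intro CollectI exI[of _ a] exI[of _ b]) auto
    next
      case 2
      then obtain a' b' where ab: "a' \<in> set rs" "b' \<in> set rs" "surv A rs a' = surv A rs b'"
        "arc \<in> comp_merge A n E (ucomp n E a') (ucomp n E b')" using 1 by auto
      have "a' \<noteq> a" "a' \<noteq> b" "b' \<noteq> a" "b' \<noteq> b" using ab 1(2) by auto
      then show ?thesis using ab by (intro CollectI exI[of _ a'] exI[of _ b']) auto
    qed
  qed
qed auto

lemma marcs_first: "x \<in> set R \<Longrightarrow> surv A R x \<noteq> x \<Longrightarrow>
  \<exists>a b. comp_merge A n E (ucomp n E a) (ucomp n E b) \<subseteq> mstep_arcs A n E R \<and>
        ((a = x \<and> b = surv A R x) \<or> (a = surv A R x \<and> b = x))"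
proof (induction A n E R rule: mstep_arcs.induct)
  case (1 A n E a b rs)
  show ?case
  proof (cases "x = a \<or> x = b")
    case True
    then show ?thesis using 1(3) by (intro exI[of _ a] exI[of _ b]) (auto split: if_splits)
  next
    case False
    then show ?thesis using 1 by fastforce
  qed
qed auto




definition J :: "(nat \<Rightarrow> real) \<Rightarrow> nat \<Rightarrow> (nat \<times> nat) set \<times> nat list \<Rightarrow> bool" where
"J A n st \<longleftrightarrow> fst st \<subseteq> {..<n} \<times> {..<n} \<and> distinct (snd st) \<and> set (snd st) \<subseteq> {..<n} \<and> snd st \<noteq> [] \<and>
   (\<forall>v<n. \<exists>r\<in>set (snd st). (r,v) \<in> (fst st)\<^sup>*) \<and> (\<forall>(x,y)\<in>fst st. A x \<le> A y) \<and>
   (\<forall>r\<in>set (snd st). \<forall>v\<in>ucomp n (fst st) r. A r \<le> A v)"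

lemma ucomp_sub: "ucomp n T r \<subseteq> {..<n}" unfolding ucomp_def by auto

lemma round_lemma:
  assumes inj: "inj_on A {..<n}" and JJ: "J A n (T,R)"
  shows "J A n (merge_round A n (T,R)) \<and> length (snd (merge_round A n (T,R))) = (length R + 1) div 2"
proof -
  have J0: "T \<subseteq> {..<n} \<times> {..<n}" and J1: "distinct R" "set R \<subseteq> {..<n}" "R \<noteq> []"
    and J2: "\<forall>v<n. \<exists>r\<in>set R. (r,v) \<in> T\<^sup>*" and J3: "\<forall>(x,y)\<in>T. A x \<le> A y"
    and J4: "\<forall>r\<in>set R. \<forall>v\<in>ucomp n T r. A r \<le> A v"
    using JJ unfolding J_def by auto
  define s where "s = surv A R"
  define M where "M = mstep_arcs A n T R"
  define H where "H = T \<union> M"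
  define R' where "R' = mstep_roots A R"
  define T' where "T' = dfs_forest A n H R'"
  have mr: "merge_round A n (T,R) = (T', R')"
    unfolding merge_round_def merge_step_def T'_def H_def M_def R'_def by simp
  have F1: "\<And>r1 r2 x. r1 \<in> set R \<Longrightarrow> r2 \<in> set R \<Longrightarrow> x \<in> ucomp n T r1 \<Longrightarrow> x \<in> ucomp n T r2 \<Longrightarrow> r1 = r2"
  proof -
    fix r1 r2 x assume r: "r1 \<in> set R" "r2 \<in> set R" "x \<in> ucomp n T r1" "x \<in> ucomp n T r2"
    have p1: "(r1,x) \<in> (T \<union> T\<inverse>)\<^sup>*" "(r2,x) \<in> (T \<union> T\<inverse>)\<^sup>*" using r(3,4) unfolding ucomp_def by auto
    have "(r1,r2) \<in> (T \<union> T\<inverse>)\<^sup>*" using p1(1) sym_path[OF p1(2)] by (meson rtrancl_trans)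
    then have "r2 \<in> ucomp n T r1" "r1 \<in> ucomp n T r2" using sym_path r J1(2) unfolding ucomp_def by auto
    then have "A r1 \<le> A r2" "A r2 \<le> A r1" using J4 r(1,2) by blast+
    then have "A r1 = A r2" by simp
    then show "r1 = r2" using inj r J1(2) by (auto dest: inj_onD)
  qed
  have ucl: "\<And>r x y. x \<in> ucomp n T r \<Longrightarrow> (x,y) \<in> T \<Longrightarrow> y \<in> ucomp n T r"
  proof -
    fix r x y assume "x \<in> ucomp n T r" "(x,y) \<in> T"
    then show "y \<in> ucomp n T r" using J0 unfolding ucomp_def
      by (auto intro: rtrancl.rtrancl_into_rtrancl)
  qed
  have rin: "\<And>r. r \<in> set R \<Longrightarrow> r \<in> ucomp n T r" using J1(2) unfolding ucomp_def by auto
  have F2: "\<And>r. r \<in> set R \<Longrightarrow> minv A (ucomp n T r) = r"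
  proof -
    fix r assume r: "r \<in> set R"
    show "minv A (ucomp n T r) = r" using minv_ucomp[OF inj, of r T] J4 J1(2) r by blast
  qed
  have fin: "\<And>r. finite (ucomp n T r)" by (rule finite_subset[OF ucomp_sub]) simp
  have M1: "\<And>x y. (x,y) \<in> M \<Longrightarrow> \<exists>a\<in>set R. \<exists>b\<in>set R. s a = s b \<and>
       x \<in> ucomp n T a \<union> ucomp n T b \<and> y \<in> ucomp n T a \<union> ucomp n T b \<and> A x \<le> A y"
  proof -
    fix x y assume "(x,y) \<in> M"
    then obtain a b where ab: "a \<in> set R" "b \<in> set R" "s a = s b"
      "(x,y) \<in> comp_merge A n T (ucomp n T a) (ucomp n T b)"
      using marcs_sub[OF J1(1), of A n T] unfolding M_def s_def by blast
    let ?S = "ucomp n T a \<union> ucomp n T b"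
    have c1: "\<forall>x w. x \<in> ?S \<longrightarrow> min_out A T (ucomp n T a) x = Some w \<longrightarrow> w \<in> ?S"
      using min_out_in[OF fin] by blast
    have c2: "\<forall>x w. x \<in> ?S \<longrightarrow> min_out A T (ucomp n T b) x = Some w \<longrightarrow> w \<in> ?S"
      using min_out_in[OF fin] by blast
    have "comp_merge A n T (ucomp n T a) (ucomp n T b) \<subseteq> {(x,y). x \<in> ?S \<and> y \<in> ?S \<and> A x \<le> A y}"
    proof -
      have e: "comp_merge A n T (ucomp n T a) (ucomp n T b) = zip_merge (2*n+2) A T (ucomp n T a) (ucomp n T b) (Some a) (Some b)"
        unfolding comp_merge_def F2[OF ab(1)] F2[OF ab(2)] ..
      have "set_option (Some a) \<subseteq> ?S" "set_option (Some b) \<subseteq> ?S" using rin ab(1,2) by auto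
      then show ?thesis unfolding e by (rule zip_arcs[OF c1 c2])
    qed
    then show "\<exists>a\<in>set R. \<exists>b\<in>set R. s a = s b \<and>
       x \<in> ucomp n T a \<union> ucomp n T b \<and> y \<in> ucomp n T a \<union> ucomp n T b \<and> A x \<le> A y"
      using ab by blast
  qed
  have M2: "\<And>a. a \<in> set R \<Longrightarrow> s a \<noteq> a \<Longrightarrow> (s a, a) \<in> M"
  proof -
    fix x assume x: "x \<in> set R" "s x \<noteq> x"
    obtain a b where ab: "comp_merge A n T (ucomp n T a) (ucomp n T b) \<subseteq> M"
      "(a = x \<and> b = s x) \<or> (a = s x \<and> b = x)"
      using marcs_first[OF x[unfolded s_def], of n T] unfolding M_def s_def by blast
    have sx: "s x \<in> set R" using surv_in[OF x(1)] mroots_sub unfolding s_def by blast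
    have "A (s x) \<le> A x" unfolding s_def by (rule surv_le)
    moreover have "A (s x) \<noteq> A x" using inj x sx J1(2) by (auto dest: inj_onD)
    ultimately have lt: "A (s x) < A x" by simp
    have "2 * n + 2 = Suc (2 * n + 1)" by simp
    then have cm: "comp_merge A n T (ucomp n T a) (ucomp n T b) =
         zip_merge (Suc (2 * n + 1)) A T (ucomp n T a) (ucomp n T b) (Some a) (Some b)"
      unfolding comp_merge_def using F2 ab(2) x(1) sx by auto
    have "(if A a < A b then (a,b) else (b,a)) \<in> M"
      using ab(1) first_arc[of A a b] cm by blast
    then show "(s x, x) \<in> M" using ab(2) lt by auto
  qed
  have Mr: "M \<subseteq> {..<n} \<times> {..<n}"
  proof
    fix arc assume "arc \<in> M"
    then obtain x y where xy: "arc = (x,y)" "(x,y) \<in> M" by (cases arc) auto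
    then obtain a b where "x \<in> ucomp n T a \<union> ucomp n T b" "y \<in> ucomp n T a \<union> ucomp n T b"
      using M1 by blast
    then have "x < n" "y < n" using ucomp_sub[of n T] by auto
    then show "arc \<in> {..<n} \<times> {..<n}" using xy by simp
  qed
  have Hr: "H \<subseteq> {..<n} \<times> {..<n}" using Mr J0 unfolding H_def by auto
  have Hw: "\<forall>(x,y)\<in>H. A x \<le> A y"
  proof
    fix arc assume "arc \<in> H"
    then obtain x y where xy: "arc = (x,y)" "(x,y) \<in> H" by (cases arc) auto
    then have "A x \<le> A y" using J3 M1[of x y] unfolding H_def by blast
    then show "case arc of (x,y) \<Rightarrow> A x \<le> A y" using xy by simp
  qed
  have R'r: "set R' \<subseteq> {..<n}" using mroots_sub J1(2) unfolding R'_def by blast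
  have sfix: "\<And>r. r \<in> set R' \<Longrightarrow> s r = r" using surv_fix[OF J1(1)] unfolding s_def R'_def by blast
  have R'R: "set R' \<subseteq> set R" using mroots_sub unfolding R'_def by blast
  have QR: "\<forall>r\<in>set R'. \<forall>r2\<in>set R'. (r2,r) \<in> H\<^sup>* \<longrightarrow> r2 = r"
  proof (intro ballI impI)
    fix r r2 assume r: "r \<in> set R'" and r2: "r2 \<in> set R'" and p: "(r2,r) \<in> H\<^sup>*"
    define U where "U = {v. \<exists>c\<in>set R. s c = r2 \<and> v \<in> ucomp n T c}"
    have "r \<in> U" using p
    proof (induction rule: rtrancl_induct)
      case base then show ?case unfolding U_def using r2 R'R rin sfix by blast
    next
      case (step y z)
      then obtain c where c: "c \<in> set R" "s c = r2" "y \<in> ucomp n T c" unfolding U_def by blast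
      show ?case
      proof (cases "(y,z) \<in> T")
        case True then show ?thesis using c ucl unfolding U_def by blast
      next
        case False
        then have "(y,z) \<in> M" using step.hyps(2) unfolding H_def by blast
        then obtain a b where ab: "a \<in> set R" "b \<in> set R" "s a = s b"
          "y \<in> ucomp n T a \<union> ucomp n T b" "z \<in> ucomp n T a \<union> ucomp n T b" using M1 by blast
        have "s a = r2"
        proof (cases "y \<in> ucomp n T a")
          case True then have "c = a" using F1[OF c(1) ab(1) c(3)] by blast
          then show ?thesis using c(2) by simp
        next
          case False then have "y \<in> ucomp n T b" using ab(4) by blast
          then have "c = b" using F1[OF c(1) ab(2) c(3)] by blast
          then show ?thesis using c(2) ab(3) by simp
        qed
        then have sa: "s a = r2" "s b = r2" using ab(3) by auto
        show ?thesis
        proof (cases "z \<in> ucomp n T a")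
          case True then show ?thesis using sa(1) ab(1) unfolding U_def by blast
        next
          case False then have "z \<in> ucomp n T b" using ab(5) by blast
          then show ?thesis using sa(2) ab(2) unfolding U_def by blast
        qed
      qed
    qed
    then obtain c where c: "c \<in> set R" "s c = r2" "r \<in> ucomp n T c" unfolding U_def by blast
    have rR: "r \<in> set R" using r R'R by blast
    have "r = c" using F1[OF rR c(1) rin[OF rR] c(3)] .
    then show "r2 = r" using c sfix r by auto
  qed
  have reach: "\<And>v. v < n \<Longrightarrow> \<exists>r\<in>set R'. (r,v) \<in> H\<^sup>*"
  proof -
    fix v assume v: "v < n"
    obtain c where c: "c \<in> set R" "(c,v) \<in> T\<^sup>*" using J2 v by blast
    have TH: "T\<^sup>* \<subseteq> H\<^sup>*" unfolding H_def by (rule rtrancl_mono) blast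
    have cv: "(c,v) \<in> H\<^sup>*" using c TH by blast
    have sc: "s c \<in> set R'" using surv_in[OF c(1)] unfolding s_def R'_def by blast
    show "\<exists>r\<in>set R'. (r,v) \<in> H\<^sup>*"
    proof (cases "s c = c")
      case True then show ?thesis using sc cv by metis
    next
      case False
      then have "(s c, c) \<in> H" using M2 c(1) unfolding H_def by blast
      then show ?thesis using sc cv by (meson converse_rtrancl_into_rtrancl)
    qed
  qed
  note DP = dfs_props[where A=A and n=n and H=H and Rt="set R'" and Q="set R'" and Ls=R' and T=T',
      OF Hr Hw inj R'r QR refl T'_def]
  have len: "length R' = (length R + 1) div 2" unfolding R'_def by (rule mroots_len)
  have K0: "T' \<subseteq> {..<n} \<times> {..<n}" using DP(1) Hr by blast
  have K1: "distinct R'" "set R' \<subseteq> {..<n}" "R' \<noteq> []"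
  proof -
    have "length R > 0" using J1(3) by simp
    then have "length R' > 0" using len by simp
    then show "distinct R'" "set R' \<subseteq> {..<n}" "R' \<noteq> []"
      using mroots_distinct[OF J1(1)] R'r unfolding R'_def by auto
  qed
  have K2: "\<forall>v<n. \<exists>r\<in>set R'. (r,v) \<in> T'\<^sup>*" using DP(5) reach by blast
  have K3: "\<forall>(x,y)\<in>T'. A x \<le> A y" using DP(1) Hw by blast
  have K4: "\<forall>r\<in>set R'. \<forall>v\<in>ucomp n T' r. A r \<le> A v"
  proof (intro ballI)
    fix r v assume r: "r \<in> set R'" and v: "v \<in> ucomp n T' r"
    have "(r,v) \<in> (T' \<union> T'\<inverse>)\<^sup>*" using v unfolding ucomp_def by auto
    then have "(r,v) \<in> T'\<^sup>*" using forest_lemma[OF DP(3)] DP(4) r by blast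
    then show "A r \<le> A v" using weak_chain[OF K3] by blast
  qed
  show ?thesis unfolding mr J_def fst_conv snd_conv using K0 K1 K2 K3 K4 len by blast
qed




lemma arg_max_in:
  fixes A :: "nat \<Rightarrow> real"
  assumes "finite S" "S \<noteq> {}"
  shows "arg_max_on A S \<in> S"
proof -
  have "Max (A ` S) \<in> A ` S" using assms by (intro Max_in) auto
  then obtain x where x: "x \<in> S" "A x = Max (A ` S)" by (metis imageE)
  have "\<And>y. y \<in> S \<Longrightarrow> \<not> A y > A x"
  proof -
    fix y assume "y \<in> S"
    then have "A y \<le> Max (A ` S)" using assms(1) by (intro Max_ge) auto
    then show "\<not> A y > A x" using x(2) by simp
  qed
  then show ?thesis unfolding arg_max_on_def
    using arg_maxI[of "\<lambda>x. x \<in> S" x A "\<lambda>x. x \<in> S"] x(1) by blast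
qed

lemma G_props: "reach1_graph A n \<subseteq> {..<n} \<times> {..<n}" "\<forall>(x,y)\<in>reach1_graph A n. A x < A y"
  unfolding reach1_graph_def by auto

lemma init_J:
  assumes n: "n \<ge> 1" and inj: "inj_on A {..<n}" and L: "distinct L" "set L = {..<n}"
    and F: "F = dfs_forest A n (reach1_graph A n) L"
  shows "J A n (merge_subtrees A n F, dfs_roots F L)"
proof -
  define G where "G = reach1_graph A n"
  have Gr: "G \<subseteq> {..<n} \<times> {..<n}" and Gs: "\<forall>(x,y)\<in>G. A x < A y" using G_props unfolding G_def by auto
  have Gw: "\<forall>(x,y)\<in>G. A x \<le> A y" using Gs by auto
  have QR: "\<forall>r\<in>{}. \<forall>r2\<in>{..<n}. (r2,r) \<in> G\<^sup>* \<longrightarrow> r2 = r" by simp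
  note DP = dfs_props[where A=A and n=n and H=G and Rt="{..<n}" and Q="{}" and Ls=L and T=F,
      OF Gr Gw inj subset_refl QR L(2) F[folded G_def]]
  have FG: "F \<subseteq> G" using DP(1) .
  have indeg: "\<forall>x y z. (x,z) \<in> F \<longrightarrow> (y,z) \<in> F \<longrightarrow> x = y" using DP(3) by blast
  have Fr: "F \<subseteq> {..<n} \<times> {..<n}" using FG Gr by blast
  have Fs: "\<forall>(x,y)\<in>F. A x < A y" using FG Gs by blast
  have Fw: "\<forall>(x,y)\<in>F. A x \<le> A y" using Fs by auto
  define R0 where "R0 = dfs_roots F L"
  have R0s: "set R0 = {r \<in> {..<n}. \<forall>p. (p,r) \<notin> F}" unfolding R0_def dfs_roots_def using L(2) by auto
  have rootex: "\<And>v. v < n \<Longrightarrow> \<exists>r\<in>set R0. (r,v) \<in> F\<^sup>*"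
  proof -
    fix v assume v: "v < n"
    define S where "S = {u. u < n \<and> (u,v) \<in> F\<^sup>*}"
    have fS: "finite S" unfolding S_def by simp
    have vS: "v \<in> S" unfolding S_def using v by simp
    then have neS: "S \<noteq> {}" by auto
    define u0 where "u0 = arg_min_on A S"
    have u0S: "u0 \<in> S" unfolding u0_def by (rule arg_min_if_finite(1)[OF fS neS])
    have u0m: "\<And>y. y \<in> S \<Longrightarrow> A u0 \<le> A y" unfolding u0_def by (rule arg_min_least[OF fS neS])
    have pl: "\<forall>p. (p,u0) \<notin> F"
    proof (intro allI notI)
      fix p assume pu: "(p,u0) \<in> F"
      then have "p < n" using Fr by auto
      moreover have "(p,v) \<in> F\<^sup>*"
      proof -
        have "(u0,v) \<in> F\<^sup>*" using u0S unfolding S_def by simp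
        then show ?thesis by (rule converse_rtrancl_into_rtrancl[OF pu])
      qed
      ultimately have "p \<in> S" unfolding S_def by simp
      then have "A u0 \<le> A p" by (rule u0m)
      moreover have "A p < A u0" using Fs pu by auto
      ultimately show False by simp
    qed
    then have "u0 \<in> set R0" using R0s u0S unfolding S_def by auto
    then show "\<exists>r\<in>set R0. (r,v) \<in> F\<^sup>*" using u0S unfolding S_def by blast
  qed
  define W where "W = (\<lambda>r. {x. (r,x) \<in> F\<^sup>*})"
  define Idx where "Idx = {r. r < n \<and> (\<forall>p. (p, r) \<notin> F) \<and> card (children F r) = 2}"
  define Z where "Z = (\<lambda>r. zip_merge (2 * n + 2) A F {..<n} {..<n} (Some (minv A (children F r)))
        (Some (arg_max_on A (children F r))))"
  have H': "merge_subtrees A n F = F \<union> (\<Union>r\<in>Idx. Z r)"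
    unfolding merge_subtrees_def Idx_def Z_def Let_def by simp
  have Wr: "\<And>r. r < n \<Longrightarrow> W r \<subseteq> {..<n}"
  proof
    fix r x assume r: "r < n" and "x \<in> W r"
    then have "(r,x) \<in> F\<^sup>*" unfolding W_def by simp
    then show "x \<in> {..<n}"
      by (induction rule: rtrancl_induct) (use r Fr in auto)
  qed
  have Zarcs: "\<And>r. r \<in> Idx \<Longrightarrow> Z r \<subseteq> {(x,y). x \<in> W r \<and> y \<in> W r \<and> A x \<le> A y}"
  proof -
    fix r assume r: "r \<in> Idx"
    have ch: "children F r \<subseteq> {..<n}" unfolding children_def using Fr by auto
    then have fch: "finite (children F r)" using finite_subset by blast
    have "card (children F r) = 2" using r unfolding Idx_def by simp
    then have nech: "children F r \<noteq> {}" by auto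
    have a: "minv A (children F r) \<in> children F r" unfolding minv_def
      by (rule arg_min_if_finite(1)[OF fch nech])
    have b: "arg_max_on A (children F r) \<in> children F r" by (rule arg_max_in[OF fch nech])
    have cW: "children F r \<subseteq> W r" unfolding children_def W_def by auto
    have c1: "\<forall>x w. x \<in> W r \<longrightarrow> min_out A F {..<n} x = Some w \<longrightarrow> w \<in> W r"
    proof (intro allI impI)
      fix x w assume "x \<in> W r" "min_out A F {..<n} x = Some w"
      then show "w \<in> W r" using min_out_in[of "{..<n}" A F x w] unfolding W_def
        by (auto intro: rtrancl.rtrancl_into_rtrancl)
    qed
    have "set_option (Some (minv A (children F r))) \<subseteq> W r"
         "set_option (Some (arg_max_on A (children F r))) \<subseteq> W r" using a b cW by auto
    then show "Z r \<subseteq> {(x,y). x \<in> W r \<and> y \<in> W r \<and> A x \<le> A y}"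
      unfolding Z_def by (rule zip_arcs[OF c1 c1])
  qed
  have Zin: "\<And>x y. (x,y) \<in> (\<Union>r\<in>Idx. Z r) \<Longrightarrow> \<exists>r\<in>Idx. x \<in> W r \<and> y \<in> W r \<and> A x \<le> A y"
    using Zarcs by blast
  have Idxr: "\<And>r. r \<in> Idx \<Longrightarrow> r < n \<and> (\<forall>p. (p,r) \<notin> F)" unfolding Idx_def by simp
  define H where "H = merge_subtrees A n F"
  have K0: "H \<subseteq> {..<n} \<times> {..<n}"
  proof
    fix arc assume "arc \<in> H"
    then obtain x y where xy: "arc = (x,y)" "(x,y) \<in> H" by (cases arc) auto
    show "arc \<in> {..<n} \<times> {..<n}"
    proof (cases "(x,y) \<in> F")
      case True then show ?thesis using Fr xy by auto
    next
      case False
      then have "(x,y) \<in> (\<Union>r\<in>Idx. Z r)" using xy H' unfolding H_def by blast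
      then obtain r where "r \<in> Idx" "x \<in> W r" "y \<in> W r" using Zin by blast
      then show ?thesis using Wr Idxr xy by blast
    qed
  qed
  have K1: "distinct R0" "set R0 \<subseteq> {..<n}" "R0 \<noteq> []"
  proof -
    show "distinct R0" unfolding R0_def dfs_roots_def using L(1) by simp
    show "set R0 \<subseteq> {..<n}" using R0s by auto
    show "R0 \<noteq> []" using rootex[of 0] n by auto
  qed
  have FH: "F\<^sup>* \<subseteq> H\<^sup>*" unfolding H_def H' by (rule rtrancl_mono) blast
  have K2: "\<forall>v<n. \<exists>r\<in>set R0. (r,v) \<in> H\<^sup>*" using rootex FH by blast
  have K3: "\<forall>(x,y)\<in>H. A x \<le> A y"
  proof
    fix arc assume "arc \<in> H"
    then obtain x y where xy: "arc = (x,y)" "(x,y) \<in> H" by (cases arc) auto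
    have "A x \<le> A y"
    proof (cases "(x,y) \<in> F")
      case True then show ?thesis using Fw by auto
    next
      case False
      then have "(x,y) \<in> (\<Union>r\<in>Idx. Z r)" using xy H' unfolding H_def by blast
      then show ?thesis using Zin by blast
    qed
    then show "case arc of (x,y) \<Rightarrow> A x \<le> A y" using xy by simp
  qed
  have K4: "\<forall>r\<in>set R0. \<forall>v\<in>ucomp n H r. A r \<le> A v"
  proof (intro ballI)
    fix r v assume r: "r \<in> set R0" and v: "v \<in> ucomp n H r"
    have rn: "r < n" and rpl: "\<forall>p. (p,r) \<notin> F" using r R0s by auto
    have cl1: "\<forall>x y. x \<in> W r \<longrightarrow> (x,y) \<in> H \<longrightarrow> y \<in> W r"
    proof (intro allI impI)
      fix x y assume x: "x \<in> W r" and xy: "(x,y) \<in> H"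
      show "y \<in> W r"
      proof (cases "(x,y) \<in> F")
        case True then show ?thesis using x unfolding W_def by (auto intro: rtrancl.rtrancl_into_rtrancl)
      next
        case False
        then have "(x,y) \<in> (\<Union>r\<in>Idx. Z r)" using xy H' unfolding H_def by blast
        then obtain r'' where r'': "r'' \<in> Idx" "x \<in> W r''" "y \<in> W r''" using Zin by blast
        have "r = r''" using roots_eq[OF indeg rpl] Idxr[OF r''(1)] x r''(2) unfolding W_def by blast
        then show ?thesis using r'' by simp
      qed
    qed
    have cl2: "\<forall>x y. x \<in> W r \<longrightarrow> (y,x) \<in> H \<longrightarrow> y \<in> W r"
    proof (intro allI impI)
      fix x y assume x: "x \<in> W r" and xy: "(y,x) \<in> H"
      show "y \<in> W r"
      proof (cases "(y,x) \<in> F")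
        case True
        have "(r,x) \<in> F\<^sup>*" using x unfolding W_def by simp
        then show ?thesis
        proof (cases rule: rtranclE)
          case base then show ?thesis using True rpl by auto
        next
          case (step z)
          then have "z = y" using indeg True by blast
          then show ?thesis using step unfolding W_def by simp
        qed
      next
        case False
        then have "(y,x) \<in> (\<Union>r\<in>Idx. Z r)" using xy H' unfolding H_def by blast
        then obtain r'' where r'': "r'' \<in> Idx" "y \<in> W r''" "x \<in> W r''" using Zin by blast
        have "r = r''" using roots_eq[OF indeg rpl] Idxr[OF r''(1)] x r''(3) unfolding W_def by blast
        then show ?thesis using r'' by simp
      qed
    qed
    have rW: "r \<in> W r" unfolding W_def by simp
    have "(r,v) \<in> (H \<union> H\<inverse>)\<^sup>*" using v unfolding ucomp_def by simp
    then have "v \<in> W r" using closed_lemma[OF cl1 cl2 rW] by blast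
    then have "(r,v) \<in> F\<^sup>*" unfolding W_def by simp
    then show "A r \<le> A v" using weak_chain[OF Fw] by blast
  qed
  show ?thesis unfolding J_def fst_conv snd_conv H_def[symmetric] R0_def[symmetric]
    using K0 K1 K2 K3 K4 by blast
qed

lemma final_one:
  assumes "J A n (T,R)" "length R = 1"
  shows "one_component n T"
proof -
  obtain r where R: "R = [r]" using assms(2) by (cases R) auto
  have rn: "r < n" and reach: "\<forall>v<n. (r,v) \<in> T\<^sup>*" using assms(1) R unfolding J_def by auto
  have m: "T\<^sup>* \<subseteq> (T \<union> T\<inverse>)\<^sup>*" by (rule rtrancl_mono) blast
  have "\<forall>u<n. \<forall>v<n. (u,v) \<in> (T \<union> T\<inverse>)\<^sup>*"
  proof (intro allI impI)
    fix u v assume "u < n" "v < n"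
    then have "(r,u) \<in> (T \<union> T\<inverse>)\<^sup>*" "(r,v) \<in> (T \<union> T\<inverse>)\<^sup>*" using reach m by auto
    then show "(u,v) \<in> (T \<union> T\<inverse>)\<^sup>*" using sym_path by (meson rtrancl_trans)
  qed
  then show ?thesis unfolding one_component_def using rn by auto
qed

lemma iterate:
  assumes inj: "inj_on A {..<n}"
  shows "J A n s \<Longrightarrow> \<exists>i\<ge>1. one_component n (fst ((merge_round A n ^^ i) s))"
proof (induction "length (snd s)" arbitrary: s rule: less_induct)
  case less
  obtain T R where s: "s = (T,R)" by (cases s)
  have r: "J A n (merge_round A n s)" "length (snd (merge_round A n s)) = (length R + 1) div 2"
    using round_lemma[OF inj, of T R] less.prems s by auto
  obtain T' R' where s': "merge_round A n s = (T',R')" by (cases "merge_round A n s")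
  have ne: "R \<noteq> []" using less.prems s unfolding J_def by auto
  show ?case
  proof (cases "length R' = 1")
    case True
    then have "one_component n T'" using final_one r(1) s' by auto
    then show ?thesis using s' by (intro exI[of _ 1]) simp
  next
    case False
    have "length R' \<ge> 1" using r(1) s' unfolding J_def by (cases R') auto
    then have "length R' < length R" using False r(2) s' by auto
    then obtain i where i: "i \<ge> 1" "one_component n (fst ((merge_round A n ^^ i) (merge_round A n s)))"
      using less.hyps[of "merge_round A n s"] r(1) s s' by auto
    have "(merge_round A n ^^ Suc i) s = (merge_round A n ^^ i) (merge_round A n s)"
      by (simp only: funpow_Suc_right comp_apply)
    then show ?thesis using i by (intro exI[of _ "Suc i"]) simp
  qed
qed

theorem corollary5:
  fixes A :: "nat \<Rightarrow> real" and n :: nat and L :: "nat list"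
  assumes "n \<ge> 1"
    and "inj_on A {..<n}"
    and "distinct L" and "set L = {..<n}"
  shows "let F = dfs_forest A n (reach1_graph A n) L;
             H' = merge_subtrees A n F;
             R0 = dfs_roots F L
         in one_component n F \<or>
            (\<exists>i\<ge>1. one_component n (fst ((merge_round A n ^^ i) (H', R0))))"
proof -
  have "J A n (merge_subtrees A n (dfs_forest A n (reach1_graph A n) L), dfs_roots (dfs_forest A n (reach1_graph A n) L) L)"
    using init_J[OF assms refl] .
  then show ?thesis unfolding Let_def using iterate[OF assms(2)] by blast
qed


end
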